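(* Let $n\ge1$, $T>0$, $W(r)=\frac14(1-r^2)^2$, and for each $\varepsilon>0$ let $u_\varepsilon,\theta_\varepsilon:(0,T)\times\mathbb{R}^n\to\mathbb{R}$ with $\theta_\varepsilon(t,\cdot)\in C^1(\mathbb{R}^n)$ for all $t$, and set $g_\varepsilon:=\theta_\varepsilon\sqrt{2W(u_\varepsilon)}$. Assume $$\sup_{\varepsilon>0}\int_0^T\!\!\int_{\mathbb{R}^n}\big(\theta_\varepsilon^2+|\nabla\theta_\varepsilon|^2\big)\,dx\,dt<\infty,$$ that $u_\varepsilon$ is a classical solution of $\varepsilon\partial_tu_\varepsilon=\varepsilon\Delta u_\varepsilon-\frac1\varepsilon W'(u_\varepsilon)+g_\varepsilon$ in $(0,T)\times\mathbb{R}^n$ with $u_\varepsilon(0,\cdot)=u^0_\varepsilon$, that $\sup_{\varepsilon>0}\mu^0_\varepsilon(\mathbb{R}^n)<\infty$, and that there is a constant $K(T)$ (independent of $\varepsilon$) with $$\sup_{x\in\mathbb{R}^n,\,R>0}\frac{\mu^t_\varepsilon(B_R(x))}{R^{n-1}}\le K(T)\quad\text{for all }t\in[0,T)\text{ and all }\varepsilon>0.$$ Then $\sup_{\varepsilon>0}\int_0^T\int_{\mathbb{R}^n}\frac1\varepsilon g_\varepsilon^2\,dx\,dt<\infty$.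
   Context: $\mu_\varepsilon^t:=\big(\frac\varepsilon2|\nabla u_\varepsilon(t,\cdot)|^2+\frac1\varepsilon W(u_\varepsilon(t,\cdot))\big)\mathcal{L}^n$ on $\mathbb{R}^n$; $B_R(x)$ is the open ball of radius $R$ centered at $x$. *)

theory Defs
  imports "HOL-Analysis.Analysis"
begin

definition W :: "real \<Rightarrow> real" where
  "W r = (1 - r\<^sup>2)\<^sup>2 / 4"

definition has_pd :: "'n::finite \<Rightarrow> (real^'n \<Rightarrow> real) \<Rightarrow> real^'n \<Rightarrow> bool" where
  "has_pd i f x \<longleftrightarrow> (\<lambda>s. f (x + s *\<^sub>R axis i 1)) differentiable (at 0)"

definition pd :: "'n::finite \<Rightarrow> (real^'n \<Rightarrow> real) \<Rightarrow> real^'n \<Rightarrow> real" where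
  "pd i f x = deriv (\<lambda>s. f (x + s *\<^sub>R axis i 1)) 0"

definition grad :: "(real^'n::finite \<Rightarrow> real) \<Rightarrow> real^'n \<Rightarrow> real^'n" where
  "grad f x = (\<chi> i. pd i f x)"

definition lap :: "(real^'n::finite \<Rightarrow> real) \<Rightarrow> real^'n \<Rightarrow> real" where
  "lap f x = (\<Sum>i\<in>UNIV. pd i (pd i f) x)"

definition dt :: "(real \<Rightarrow> real^'n::finite \<Rightarrow> real) \<Rightarrow> real \<Rightarrow> real^'n \<Rightarrow> real" where
  "dt u t x = deriv (\<lambda>s. u s x) t"

text \<open>The measure mu (energy) of a set A for the profile f at parameter eps:
  integral over A of eps/2 |grad f|^2 + W(f)/eps.\<close>
definition energy :: "real \<Rightarrow> (real^'n::finite \<Rightarrow> real) \<Rightarrow> (real^'n) set \<Rightarrow> ennreal" where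
  "energy eps f A = (\<integral>\<^sup>+ y\<in>A. ennreal (eps / 2 * (norm (grad f y))\<^sup>2 + W (f y) / eps) \<partial>lborel)"

definition classical_solution ::
  "real \<Rightarrow> real \<Rightarrow> (real \<Rightarrow> real^'n::finite \<Rightarrow> real) \<Rightarrow> (real^'n \<Rightarrow> real)
     \<Rightarrow> (real \<Rightarrow> real^'n \<Rightarrow> real) \<Rightarrow> bool" where
  "classical_solution T eps u u0 g \<longleftrightarrow>
     (\<forall>t\<in>{0<..<T}. \<forall>x. (\<lambda>s. u s x) differentiable (at t) \<and>
        (\<forall>i. has_pd i (u t) x \<and> (\<forall>j. has_pd j (pd i (u t)) x))) \<and>
     continuous_on ({0<..<T} \<times> UNIV) (\<lambda>(t, x). dt u t x) \<and>
     (\<forall>i. continuous_on ({0<..<T} \<times> UNIV) (\<lambda>(t, x). pd i (u t) x)) \<and>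
     (\<forall>i j. continuous_on ({0<..<T} \<times> UNIV) (\<lambda>(t, x). pd j (pd i (u t)) x)) \<and>
     continuous_on ({0..<T} \<times> UNIV) (\<lambda>(t, x). u t x) \<and>
     (\<forall>x. u 0 x = u0 x) \<and>
     (\<forall>t\<in>{0<..<T}. \<forall>x.
        eps * dt u t x = eps * lap (u t) x - (1 / eps) * deriv W (u t x) + g t x)"

end

theory Submission
  imports Defs
begin


lemma pd_eq:
  fixes f :: "real^'n::finite \<Rightarrow> real"
  assumes D: "(f has_derivative D) (at x)"
  shows "pd i f x = D (axis i 1)"
proof -
  have l: "linear D" using D has_derivative_linear by blast
  have "((\<lambda>s. x + s *\<^sub>R axis i 1) has_derivative (\<lambda>s. s *\<^sub>R axis i 1)) (at 0)"
    by (auto intro!: derivative_eq_intros)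
  moreover have "(f has_derivative D) (at (x + 0 *\<^sub>R axis i (1::real)))" using D by simp
  ultimately have "((\<lambda>s. f (x + s *\<^sub>R axis i 1)) has_derivative (\<lambda>s. D (s *\<^sub>R axis i 1))) (at 0)"
    using has_derivative_compose[of "\<lambda>s. x + s *\<^sub>R axis i 1" _ 0 UNIV f D] by (simp add: o_def)
  then have "((\<lambda>s. f (x + s *\<^sub>R axis i 1)) has_derivative (\<lambda>s. s * D (axis i 1))) (at 0)"
    using linear_scale[OF l] by simp
  then have "((\<lambda>s. f (x + s *\<^sub>R axis i 1)) has_real_derivative D (axis i 1)) (at 0)"
    by (simp add: has_field_derivative_def mult.commute[of _ "D (axis i 1)"])
  then show ?thesis unfolding pd_def by (rule DERIV_imp_deriv)
qed

lemma grad_deriv: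
  fixes f :: "real^'n::finite \<Rightarrow> real"
  assumes "f differentiable (at x)"
  shows "(f has_derivative (\<lambda>h. grad f x \<bullet> h)) (at x)"
proof -
  obtain D where D: "(f has_derivative D) (at x)" using assms differentiable_def by blast
  have l: "linear D" using D has_derivative_linear by blast
  have "D h = grad f x \<bullet> h" for h
  proof -
    have "D h = D (\<Sum>i\<in>UNIV. h$i *\<^sub>R axis i 1)"
      using basis_expansion[of h] by (simp add: scalar_mult_eq_scaleR)
    also have "\<dots> = (\<Sum>i\<in>UNIV. h$i * D (axis i 1))"
      by (simp add: linear_sum[OF l] linear_scale[OF l])
    also have "\<dots> = grad f x \<bullet> h"
      by (simp add: inner_vec_def grad_def pd_eq[OF D] mult.commute)
    finally show ?thesis .
  qed
  then have "D = (\<lambda>h. grad f x \<bullet> h)" by auto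
  then show ?thesis using D by simp
qed



lemma jensen01:
  fixes h :: "real \<Rightarrow> real"
  assumes c: "continuous_on {0..1} h"
  shows "(integral {0..1} h)\<^sup>2 \<le> integral {0..1} (\<lambda>r. (h r)\<^sup>2)"
proof -
  define m where "m = integral {0..1} h"
  have ih: "h integrable_on {0..1}" using c integrable_continuous_interval by blast
  have c2: "continuous_on {0..1} (\<lambda>r. (h r)\<^sup>2)" using c by (intro continuous_intros)
  have ih2: "(\<lambda>r. (h r)\<^sup>2) integrable_on {0..1}" using c2 integrable_continuous_interval by blast
  have c3: "continuous_on {0..1} (\<lambda>r. (h r - m)\<^sup>2)" using c by (intro continuous_intros)
  have "0 \<le> integral {0..1} (\<lambda>r. (h r - m)\<^sup>2)"
    using c3 integrable_continuous_interval by (intro integral_nonneg) auto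
  also have "(\<lambda>r. (h r - m)\<^sup>2) = (\<lambda>r. ((h r)\<^sup>2 - 2 * m * h r) + m\<^sup>2)"
    by (rule ext) (simp add: power2_eq_square algebra_simps)
  also have "integral {0..1} \<dots> = integral {0..1} (\<lambda>r. (h r)\<^sup>2) - 2 * m * m + m\<^sup>2"
  proof (rule integral_unique)
    have a: "((\<lambda>r. (h r)\<^sup>2) has_integral integral {0..1} (\<lambda>r. (h r)\<^sup>2)) {0..1}"
      using ih2 by (rule integrable_integral)
    have b: "((\<lambda>r. 2 * m * h r) has_integral 2 * m * m) {0..1}"
      using ih unfolding m_def by (intro has_integral_mult_right integrable_integral)
    have d: "((\<lambda>r. m\<^sup>2) has_integral m\<^sup>2) {0..1::real}"
      using has_integral_const_real[of "m\<^sup>2" 0 1] by simp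
    show "((\<lambda>r. ((h r)\<^sup>2 - 2 * m * h r) + m\<^sup>2) has_integral integral {0..1} (\<lambda>r. (h r)\<^sup>2) - 2 * m * m + m\<^sup>2) {0..1}"
      by (intro has_integral_add has_integral_diff a b d)
  qed
  finally show ?thesis by (simp add: m_def power2_eq_square)
qed



lemma ftc_bound:
  fixes f :: "real^'n::finite \<Rightarrow> real"
  assumes d: "\<forall>x. f differentiable (at x)" and cg: "continuous_on UNIV (grad f)"
    and dyw: "dist y w \<le> 1"
  shows "(f y)\<^sup>2 \<le> 2*(f w)\<^sup>2 + 2 * integral {0..1} (\<lambda>r. (2*r*norm (grad f (y + r\<^sup>2 *\<^sub>R (w-y))))\<^sup>2)"
proof -
  define p where "p r = y + r\<^sup>2 *\<^sub>R (w-y)" for r :: real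
  define f' where "f' r = grad f (p r) \<bullet> ((2*r) *\<^sub>R (w-y))" for r
  define h where "h r = 2*r*norm (grad f (p r))" for r
  have pd: "(p has_vector_derivative (2*r) *\<^sub>R (w-y)) (at r within S)" for r S
    unfolding p_def by (auto intro!: derivative_eq_intros simp: scaleR_add_right)
  have fd: "((f \<circ> p) has_vector_derivative f' r) (at r within {0..1})" for r
  proof -
    have "(f has_derivative (\<lambda>h. grad f (p r) \<bullet> h)) (at (p r) within p ` {0..1})"
      using grad_deriv[OF d[rule_format]] has_derivative_at_withinI by blast
    from vector_derivative_diff_chain_within[OF pd this] show ?thesis by (simp add: f'_def)
  qed
  have "(f' has_integral (f \<circ> p) 1 - (f \<circ> p) 0) {0..1}"
    by (rule fundamental_theorem_of_calculus) (use fd in \<open>auto simp: o_def\<close>)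
  then have fi: "(f' has_integral f w - f y) {0..1}" by (simp add: p_def)
  have cp: "continuous_on {0..1} p" unfolding p_def by (intro continuous_intros)
  have ch: "continuous_on {0..1} h" unfolding h_def
    by (intro continuous_intros continuous_on_compose2[OF cg cp]) auto
  have nb: "norm (f' r) \<le> h r" if "r \<in> {0..1}" for r
  proof -
    have "norm (f' r) \<le> norm (grad f (p r)) * norm ((2*r) *\<^sub>R (w-y))"
      unfolding f'_def real_norm_def by (rule Cauchy_Schwarz_ineq2)
    also have "\<dots> = norm (grad f (p r)) * (2*r) * norm (w-y)" using that by simp
    also have "\<dots> \<le> norm (grad f (p r)) * (2*r) * 1"
      using that dyw by (intro mult_left_mono) (auto simp: dist_norm norm_minus_commute)
    finally show ?thesis by (simp add: h_def mult.commute)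
  qed
  have "norm (integral {0..1} f') \<le> integral {0..1} h"
    using fi ch nb integrable_continuous_interval
    by (intro Henstock_Kurzweil_Integration.integral_norm_bound_integral) auto
  then have "\<bar>f w - f y\<bar> \<le> integral {0..1} h" using fi by (simp add: integral_unique)
  then have "(f w - f y)\<^sup>2 \<le> (integral {0..1} h)\<^sup>2"
    by (metis abs_ge_zero abs_le_square_iff abs_of_nonneg order.trans power2_abs)
  also have "\<dots> \<le> integral {0..1} (\<lambda>r. (h r)\<^sup>2)" by (rule jensen01[OF ch])
  finally have "(f w - f y)\<^sup>2 \<le> integral {0..1} (\<lambda>r. (h r)\<^sup>2)" .
  moreover have "(f y)\<^sup>2 \<le> 2*(f w)\<^sup>2 + 2*(f w - f y)\<^sup>2"
  proof -
    have "2*(f w)\<^sup>2 + 2*(f w - f y)\<^sup>2 - (f y)\<^sup>2 = (2*f w - f y)\<^sup>2"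
      by (simp add: power2_eq_square algebra_simps)
    moreover have "0 \<le> (2*f w - f y)\<^sup>2" by simp
    ultimately show ?thesis by linarith
  qed
  ultimately show ?thesis by (simp add: h_def p_def)
qed



lemma nn_affine:
  fixes F :: "real^'n::finite \<Rightarrow> ennreal"
  assumes [measurable]: "F \<in> borel_measurable borel" and s: "s > 0"
  shows "(\<integral>\<^sup>+z. F z \<partial>lborel) = ennreal (s ^ CARD('n)) * (\<integral>\<^sup>+w. F (t + s *\<^sub>R w) \<partial>lborel)"
  using s by (subst lborel_affine[of s t]) (simp_all add: nn_integral_density nn_integral_distr nn_integral_cmult)

lemma emeasure_ball1:
  fixes y :: "real^'n::finite"
  shows "emeasure lborel (ball y 1) = ennreal (measure lborel (ball (0::real^'n) 1))"
  using content_ball_conv_unit_ball[of 1 y] emeasure_lborel_ball_finite[of y 1]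
  by (simp add: emeasure_eq_ennreal_measure)

lemma J_eq:
  fixes G :: "real^'n::finite \<Rightarrow> real"
  assumes cG: "continuous_on UNIV G"
  shows "(\<integral>\<^sup>+r. ennreal (indicator {0..1} r * (2*r*G(y + r\<^sup>2 *\<^sub>R (w-y)))\<^sup>2) \<partial>lborel)
     = ennreal (integral {0..1} (\<lambda>r. (2*r*G(y + r\<^sup>2 *\<^sub>R (w-y)))\<^sup>2))"
proof -
  have c: "continuous_on {0..1} (\<lambda>r::real. (2*r*G(y + r\<^sup>2 *\<^sub>R (w-y)))\<^sup>2)"
    by (intro continuous_intros continuous_on_compose2[OF cG]) auto
  show ?thesis
    by (rule nn_integral_has_integral_lebesgue) (auto intro: integrable_integral integrable_continuous_interval[OF c])
qed



lemma per_r: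
  fixes G rho :: "real^'n::finite \<Rightarrow> real" and Kp r :: real
  assumes Gm[measurable]: "G \<in> borel_measurable borel" and rm[measurable]: "rho \<in> borel_measurable borel"
    and rpos: "\<forall>y. 0 \<le> rho y" and Kp: "0 \<le> Kp"
    and dens: "\<forall>z. \<forall>s>0. (\<integral>\<^sup>+y. ennreal (rho y) * indicator (ball z s) y \<partial>lborel) \<le> ennreal (Kp * s ^ (CARD('n) - 1))"
    and r: "0 < r"
  shows "(\<integral>\<^sup>+y. \<integral>\<^sup>+w. ennreal (rho y) * (indicator (ball y 1) w * ennreal ((2*r*G(y + r\<^sup>2 *\<^sub>R (w-y)))\<^sup>2)) \<partial>lborel \<partial>lborel)
     \<le> ennreal (4*Kp) * (\<integral>\<^sup>+z. ennreal ((G z)\<^sup>2) \<partial>lborel)"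
proof -
  define s where "s = r\<^sup>2"
  define n where "n = CARD('n)"
  have s: "s > 0" using r by (simp add: s_def)
  have n: "n \<ge> 1" unfolding n_def by (simp add: Suc_leI)
  define c where "c = 4 * r\<^sup>2 / s ^ n"
  have c: "c \<ge> 0" using s by (simp add: c_def)
  have inner: "(\<integral>\<^sup>+w. indicator (ball y 1) w * ennreal ((2*r*G(y + r\<^sup>2 *\<^sub>R (w-y)))\<^sup>2) \<partial>lborel)
      = ennreal c * (\<integral>\<^sup>+z. indicator (ball y s) z * ennreal ((G z)\<^sup>2) \<partial>lborel)" for y
  proof -
    define F where "F z = indicator (ball y s) z * ennreal ((G z)\<^sup>2)" for z
    have Fm: "F \<in> borel_measurable borel" unfolding F_def indicator_def mem_ball by measurable
    have eqF: "F ((y - s *\<^sub>R y) + s *\<^sub>R w) = indicator (ball y 1) w * ennreal ((G (y + r\<^sup>2 *\<^sub>R (w-y)))\<^sup>2)" for w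
    proof -
      have e: "(y - s *\<^sub>R y) + s *\<^sub>R w = y + s *\<^sub>R (w - y)" by (simp add: algebra_simps)
      have "dist y (y + s *\<^sub>R (w - y)) = s * dist y w" using s
        by (simp add: dist_norm norm_minus_commute)
      then have mem: "(y + s *\<^sub>R (w - y) \<in> ball y s) = (w \<in> ball y 1)" using s by simp
      show ?thesis unfolding F_def e by (simp only: mem indicator_def) (simp add: s_def)
    qed
    have "(\<integral>\<^sup>+z. F z \<partial>lborel) = ennreal (s ^ n) * (\<integral>\<^sup>+w. F ((y - s *\<^sub>R y) + s *\<^sub>R w) \<partial>lborel)"
      unfolding n_def by (rule nn_affine[OF Fm s])
    then have A: "(\<integral>\<^sup>+w. indicator (ball y 1) w * ennreal ((G (y + r\<^sup>2 *\<^sub>R (w-y)))\<^sup>2) \<partial>lborel)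
        = ennreal (1 / s ^ n) * (\<integral>\<^sup>+z. F z \<partial>lborel)"
      using s by (simp add: eqF mult.assoc[symmetric] ennreal_mult[symmetric])
    have "(\<integral>\<^sup>+w. indicator (ball y 1) w * ennreal ((2*r*G(y + r\<^sup>2 *\<^sub>R (w-y)))\<^sup>2) \<partial>lborel)
        = (\<integral>\<^sup>+w. ennreal (4*r\<^sup>2) * (indicator (ball y 1) w * ennreal ((G (y + r\<^sup>2 *\<^sub>R (w-y)))\<^sup>2)) \<partial>lborel)"
      by (intro nn_integral_cong) (simp add: ennreal_mult[symmetric] power_mult_distrib mult_ac)
    also have "\<dots> = ennreal (4*r\<^sup>2) * (\<integral>\<^sup>+w. indicator (ball y 1) w * ennreal ((G (y + r\<^sup>2 *\<^sub>R (w-y)))\<^sup>2) \<partial>lborel)"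
      by (rule nn_integral_cmult) (unfold indicator_def mem_ball, measurable)
    also have "\<dots> = ennreal c * (\<integral>\<^sup>+z. F z \<partial>lborel)"
      unfolding A c_def using s by (simp add: mult.assoc[symmetric] ennreal_mult[symmetric])
    finally show ?thesis unfolding F_def .
  qed
  have "(\<integral>\<^sup>+y. \<integral>\<^sup>+w. ennreal (rho y) * (indicator (ball y 1) w * ennreal ((2*r*G(y + r\<^sup>2 *\<^sub>R (w-y)))\<^sup>2)) \<partial>lborel \<partial>lborel)
     = (\<integral>\<^sup>+y. ennreal (rho y) * (ennreal c * (\<integral>\<^sup>+z. indicator (ball y s) z * ennreal ((G z)\<^sup>2) \<partial>lborel)) \<partial>lborel)"
  proof (intro nn_integral_cong)
    fix y
    show "(\<integral>\<^sup>+w. ennreal (rho y) * (indicator (ball y 1) w * ennreal ((2*r*G(y + r\<^sup>2 *\<^sub>R (w-y)))\<^sup>2)) \<partial>lborel)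
       = ennreal (rho y) * (ennreal c * (\<integral>\<^sup>+z. indicator (ball y s) z * ennreal ((G z)\<^sup>2) \<partial>lborel))"
      by (subst nn_integral_cmult) (unfold indicator_def mem_ball, measurable, simp add: inner[unfolded indicator_def mem_ball])
  qed
  also have "\<dots> = (\<integral>\<^sup>+y. ennreal c * (\<integral>\<^sup>+z. ennreal (rho y) * indicator (ball y s) z * ennreal ((G z)\<^sup>2) \<partial>lborel) \<partial>lborel)"
  proof (intro nn_integral_cong)
    fix y
    have "(\<integral>\<^sup>+z. ennreal (rho y) * indicator (ball y s) z * ennreal ((G z)\<^sup>2) \<partial>lborel)
       = ennreal (rho y) * (\<integral>\<^sup>+z. indicator (ball y s) z * ennreal ((G z)\<^sup>2) \<partial>lborel)"
      by (subst nn_integral_cmult[symmetric]) (unfold indicator_def mem_ball, measurable, simp add: mult.assoc)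
    then show "ennreal (rho y) * (ennreal c * (\<integral>\<^sup>+z. indicator (ball y s) z * ennreal ((G z)\<^sup>2) \<partial>lborel))
       = ennreal c * (\<integral>\<^sup>+z. ennreal (rho y) * indicator (ball y s) z * ennreal ((G z)\<^sup>2) \<partial>lborel)"
      by (simp add: mult_ac)
  qed
  also have "\<dots> = ennreal c * (\<integral>\<^sup>+y. \<integral>\<^sup>+z. ennreal (rho y) * indicator (ball y s) z * ennreal ((G z)\<^sup>2) \<partial>lborel \<partial>lborel)"
  proof (rule nn_integral_cmult)
    have "(\<lambda>(y,z). ennreal (rho y) * indicator (ball y s) z * ennreal ((G z)\<^sup>2)) \<in> borel_measurable (lborel \<Otimes>\<^sub>M lborel)"
      unfolding indicator_def mem_ball by measurable
    then show "(\<lambda>y. \<integral>\<^sup>+z. ennreal (rho y) * indicator (ball y s) z * ennreal ((G z)\<^sup>2) \<partial>lborel) \<in> borel_measurable lborel"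
      using lborel.borel_measurable_nn_integral[of "\<lambda>y z. ennreal (rho y) * indicator (ball y s) z * ennreal ((G z)\<^sup>2)" lborel] by simp
  qed
  also have "(\<integral>\<^sup>+y. \<integral>\<^sup>+z. ennreal (rho y) * indicator (ball y s) z * ennreal ((G z)\<^sup>2) \<partial>lborel \<partial>lborel)
      = (\<integral>\<^sup>+z. \<integral>\<^sup>+y. ennreal (rho y) * indicator (ball y s) z * ennreal ((G z)\<^sup>2) \<partial>lborel \<partial>lborel)"
    by (rule lborel_pair.Fubini'[symmetric]) (unfold indicator_def mem_ball, measurable)
  also have "\<dots> = (\<integral>\<^sup>+z. ennreal ((G z)\<^sup>2) * (\<integral>\<^sup>+y. ennreal (rho y) * indicator (ball z s) y \<partial>lborel) \<partial>lborel)"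
  proof (intro nn_integral_cong)
    fix z
    have "(\<integral>\<^sup>+y. ennreal (rho y) * indicator (ball y s) z * ennreal ((G z)\<^sup>2) \<partial>lborel)
       = (\<integral>\<^sup>+y. ennreal ((G z)\<^sup>2) * (ennreal (rho y) * indicator (ball z s) y) \<partial>lborel)"
      by (intro nn_integral_cong) (simp add: indicator_def dist_commute mult_ac)
    also have "\<dots> = ennreal ((G z)\<^sup>2) * (\<integral>\<^sup>+y. ennreal (rho y) * indicator (ball z s) y \<partial>lborel)"
      by (rule nn_integral_cmult) (unfold indicator_def mem_ball, measurable)
    finally show "(\<integral>\<^sup>+y. ennreal (rho y) * indicator (ball y s) z * ennreal ((G z)\<^sup>2) \<partial>lborel)
       = ennreal ((G z)\<^sup>2) * (\<integral>\<^sup>+y. ennreal (rho y) * indicator (ball z s) y \<partial>lborel)" .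
  qed
  also have "\<dots> \<le> (\<integral>\<^sup>+z. ennreal ((G z)\<^sup>2) * ennreal (Kp * s ^ (n - 1)) \<partial>lborel)"
    using dens s unfolding n_def by (intro nn_integral_mono mult_left_mono) auto
  also have "\<dots> = (\<integral>\<^sup>+z. ennreal ((G z)\<^sup>2) \<partial>lborel) * ennreal (Kp * s ^ (n - 1))"
    by (rule nn_integral_multc) measurable
  also have "ennreal c * ((\<integral>\<^sup>+z. ennreal ((G z)\<^sup>2) \<partial>lborel) * ennreal (Kp * s ^ (n - 1)))
      = ennreal (c * (Kp * s ^ (n - 1))) * (\<integral>\<^sup>+z. ennreal ((G z)\<^sup>2) \<partial>lborel)"
  proof -
    have "ennreal (c * (Kp * s ^ (n - 1))) = ennreal c * ennreal (Kp * s ^ (n - 1))"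
      by (rule ennreal_mult) (use c Kp s in auto)
    then show ?thesis by (simp add: mult_ac)
  qed
  also have "c * (Kp * s ^ (n - 1)) = 4 * Kp"
  proof -
    have "s ^ n = s * s ^ (n - 1)" using n by (metis Suc_diff_1 less_le_trans power_Suc zero_less_one)
    then show ?thesis unfolding c_def s_def using r by (simp add: field_simps)
  qed
  finally show ?thesis by (metis mult_left_mono zero_le)
qed



lemma key:
  fixes f rho :: "real^'n::finite \<Rightarrow> real" and Kp :: real
  assumes d: "\<forall>x. f differentiable (at x)" and cg: "continuous_on UNIV (grad f)"
    and rm[measurable]: "rho \<in> borel_measurable borel" and rpos: "\<forall>y. 0 \<le> rho y" and Kp: "0 \<le> Kp"
    and dens: "\<forall>z. \<forall>s>0. (\<integral>\<^sup>+y. ennreal (rho y) * indicator (ball z s) y \<partial>lborel) \<le> ennreal (Kp * s ^ (CARD('n) - 1))"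
  shows "ennreal (measure lborel (ball (0::real^'n) 1)) * (\<integral>\<^sup>+y. ennreal (rho y * (f y)\<^sup>2) \<partial>lborel)
      \<le> ennreal (16 * Kp) * (\<integral>\<^sup>+y. ennreal ((f y)\<^sup>2 + (norm (grad f y))\<^sup>2) \<partial>lborel)"
proof -
  define G where "G x = norm (grad f x)" for x
  define V where "V = measure lborel (ball (0::real^'n) 1)"
  have cf: "continuous_on UNIV f"
    using d by (intro continuous_at_imp_continuous_on ballI differentiable_imp_continuous_within) auto
  have cG: "continuous_on UNIV G" unfolding G_def using cg by (intro continuous_intros)
  have fm[measurable]: "f \<in> borel_measurable borel" using cf borel_measurable_continuous_onI by blast
  have Gm[measurable]: "G \<in> borel_measurable borel" using cG borel_measurable_continuous_onI by blast
  define \<Phi> where "\<Phi> y w r = ennreal (rho y) * indicator (ball y 1) w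
      * ennreal (indicator {0..1} r * (2*r*G(y + r\<^sup>2 *\<^sub>R (w-y)))\<^sup>2)" for y w :: "real^'n" and r :: real
  define J where "J y w = (\<integral>\<^sup>+r. ennreal (indicator {0..1} r * (2*r*G(y + r\<^sup>2 *\<^sub>R (w-y)))\<^sup>2) \<partial>lborel)"
    for y w :: "real^'n"
  have m3: "(\<lambda>x. \<Phi> (fst (fst x)) (snd x) (snd (fst x))) \<in> borel_measurable ((lborel \<Otimes>\<^sub>M lborel) \<Otimes>\<^sub>M lborel)"
    unfolding \<Phi>_def indicator_def mem_ball atLeastAtMost_iff by measurable
  have mJ: "(\<lambda>x. ennreal (indicator {0..1} (snd x) * (2 * snd x * G(fst (fst x) + (snd x)\<^sup>2 *\<^sub>R (snd (fst x)-fst (fst x))))\<^sup>2))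
     \<in> borel_measurable ((lborel \<Otimes>\<^sub>M lborel) \<Otimes>\<^sub>M lborel)"
    unfolding indicator_def atLeastAtMost_iff by measurable
  have Jm[measurable]: "(\<lambda>x. J (fst x) (snd x)) \<in> borel_measurable (lborel \<Otimes>\<^sub>M lborel)"
    unfolding J_def using lborel.borel_measurable_nn_integral[of "\<lambda>p r. ennreal (indicator {0..1} r * (2*r*G(fst p + r\<^sup>2 *\<^sub>R (snd p-fst p)))\<^sup>2)" "lborel \<Otimes>\<^sub>M lborel"] mJ
    by (simp add: split_beta')
  have Jm1[measurable]: "(\<lambda>w. J y w) \<in> borel_measurable lborel" for y
    using measurable_compose[OF measurable_Pair1' Jm, of y] by (simp add: measurable_lborel1)
  have J_nonneg_int: "J y w = ennreal (integral {0..1} (\<lambda>r. (2*r*G(y + r\<^sup>2 *\<^sub>R (w-y)))\<^sup>2))" for y w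
    unfolding J_def by (rule J_eq[OF cG])
  have step1: "ennreal ((f y)\<^sup>2) \<le> 2 * ennreal ((f w)\<^sup>2) + 2 * J y w" if "dist y w \<le> 1" for y w
  proof -
    define I where "I = integral {0..1} (\<lambda>r. (2*r*G(y + r\<^sup>2 *\<^sub>R (w-y)))\<^sup>2)"
    have c: "continuous_on {0..1} (\<lambda>r::real. (2*r*G(y + r\<^sup>2 *\<^sub>R (w-y)))\<^sup>2)"
      by (intro continuous_intros continuous_on_compose2[OF cG]) auto
    have I0: "0 \<le> I" unfolding I_def
      by (rule integral_nonneg) (auto intro: integrable_continuous_interval[OF c])
    have "(f y)\<^sup>2 \<le> 2*(f w)\<^sup>2 + 2 * I"
      using ftc_bound[OF d cg that] unfolding I_def G_def .
    then have "ennreal ((f y)\<^sup>2) \<le> ennreal (2*(f w)\<^sup>2 + 2 * I)" by (rule ennreal_leI)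
    also have "\<dots> = 2 * ennreal ((f w)\<^sup>2) + 2 * ennreal I"
      using I0 by (simp add: ennreal_plus ennreal_mult)
    finally show ?thesis by (simp add: J_nonneg_int I_def)
  qed
  define a where "a w = ennreal ((f w)\<^sup>2)" for w
  have am[measurable]: "a \<in> borel_measurable borel" unfolding a_def by measurable
  define A1 where "A1 y = (\<integral>\<^sup>+w. ennreal (rho y) * indicator (ball y 1) w * a w \<partial>lborel)" for y
  define B1 where "B1 y = (\<integral>\<^sup>+w. ennreal (rho y) * indicator (ball y 1) w * J y w \<partial>lborel)" for y
  have mA1[measurable]: "A1 \<in> borel_measurable lborel"
  proof -
    have "(\<lambda>(y,w). ennreal (rho y) * indicator (ball y 1) w * a w) \<in> borel_measurable (lborel \<Otimes>\<^sub>M lborel)"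
      unfolding indicator_def mem_ball by measurable
    then show ?thesis unfolding A1_def
      using lborel.borel_measurable_nn_integral[of "\<lambda>y w. ennreal (rho y) * indicator (ball y 1) w * a w" lborel] by simp
  qed
  have mB1[measurable]: "B1 \<in> borel_measurable lborel"
  proof -
    have "(\<lambda>x. ennreal (rho (fst x)) * indicator (ball (fst x) 1) (snd x) * J (fst x) (snd x)) \<in> borel_measurable (lborel \<Otimes>\<^sub>M lborel)"
      unfolding indicator_def mem_ball by measurable
    then show ?thesis unfolding B1_def
      using lborel.borel_measurable_nn_integral[of "\<lambda>y w. ennreal (rho y) * indicator (ball y 1) w * J y w" lborel] by (simp add: split_beta')
  qed
  have step2: "ennreal V * ennreal (rho y * (f y)\<^sup>2) \<le> 2 * A1 y + 2 * B1 y" for y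
  proof -
    have "ennreal V * ennreal (rho y * (f y)\<^sup>2) = (\<integral>\<^sup>+w. ennreal (rho y * (f y)\<^sup>2) * indicator (ball y 1) w \<partial>lborel)"
    proof -
      have "(\<integral>\<^sup>+w. ennreal (rho y * (f y)\<^sup>2) * indicator (ball y 1) w \<partial>lborel) = ennreal (rho y * (f y)\<^sup>2) * emeasure lborel (ball y 1)"
        by (rule nn_integral_cmult_indicator) simp
      then show ?thesis by (simp only: emeasure_ball1 V_def mult.commute)
    qed
    also have "\<dots> \<le> (\<integral>\<^sup>+w. 2 * (ennreal (rho y) * indicator (ball y 1) w * a w) + 2 * (ennreal (rho y) * indicator (ball y 1) w * J y w) \<partial>lborel)"
    proof (intro nn_integral_mono)
      fix w
      show "ennreal (rho y * (f y)\<^sup>2) * indicator (ball y 1) w \<le> 2 * (ennreal (rho y) * indicator (ball y 1) w * a w) + 2 * (ennreal (rho y) * indicator (ball y 1) w * J y w)"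
      proof (cases "w \<in> ball y 1")
        case True
        then have "dist y w \<le> 1" by simp
        from step1[OF this] have "ennreal (rho y) * ennreal ((f y)\<^sup>2) \<le> ennreal (rho y) * (2 * a w + 2 * J y w)"
          unfolding a_def by (rule mult_left_mono) simp
        then show ?thesis using True rpos by (simp add: ennreal_mult distrib_left mult_ac)
      qed simp
    qed
    also have "\<dots> = 2 * A1 y + 2 * B1 y"
      unfolding A1_def B1_def
      by (subst nn_integral_add) (unfold indicator_def mem_ball, measurable, simp add: nn_integral_cmult)
    finally show ?thesis .
  qed
  have "ennreal V * (\<integral>\<^sup>+y. ennreal (rho y * (f y)\<^sup>2) \<partial>lborel) = (\<integral>\<^sup>+y. ennreal V * ennreal (rho y * (f y)\<^sup>2) \<partial>lborel)"
    by (rule nn_integral_cmult[symmetric]) measurable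
  also have "\<dots> \<le> (\<integral>\<^sup>+y. 2 * A1 y + 2 * B1 y \<partial>lborel)"
    by (intro nn_integral_mono step2)
  also have "\<dots> = 2 * (\<integral>\<^sup>+y. A1 y \<partial>lborel) + 2 * (\<integral>\<^sup>+y. B1 y \<partial>lborel)"
    by (simp add: nn_integral_add nn_integral_cmult)
  finally have main: "ennreal V * (\<integral>\<^sup>+y. ennreal (rho y * (f y)\<^sup>2) \<partial>lborel) \<le> 2 * (\<integral>\<^sup>+y. A1 y \<partial>lborel) + 2 * (\<integral>\<^sup>+y. B1 y \<partial>lborel)" .
  have Abound: "(\<integral>\<^sup>+y. A1 y \<partial>lborel) \<le> ennreal Kp * (\<integral>\<^sup>+w. a w \<partial>lborel)"
  proof -
    have "(\<integral>\<^sup>+y. A1 y \<partial>lborel) = (\<integral>\<^sup>+w. \<integral>\<^sup>+y. ennreal (rho y) * indicator (ball y 1) w * a w \<partial>lborel \<partial>lborel)"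
      unfolding A1_def by (rule lborel_pair.Fubini'[symmetric]) (unfold indicator_def mem_ball, measurable)
    also have "\<dots> = (\<integral>\<^sup>+w. a w * (\<integral>\<^sup>+y. ennreal (rho y) * indicator (ball w 1) y \<partial>lborel) \<partial>lborel)"
    proof (intro nn_integral_cong)
      fix w
      have "(\<integral>\<^sup>+y. ennreal (rho y) * indicator (ball y 1) w * a w \<partial>lborel)
         = (\<integral>\<^sup>+y. a w * (ennreal (rho y) * indicator (ball w 1) y) \<partial>lborel)"
        by (intro nn_integral_cong) (simp add: indicator_def dist_commute mult_ac)
      also have "\<dots> = a w * (\<integral>\<^sup>+y. ennreal (rho y) * indicator (ball w 1) y \<partial>lborel)"
        by (rule nn_integral_cmult) (unfold indicator_def mem_ball, measurable)
      finally show "(\<integral>\<^sup>+y. ennreal (rho y) * indicator (ball y 1) w * a w \<partial>lborel)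
         = a w * (\<integral>\<^sup>+y. ennreal (rho y) * indicator (ball w 1) y \<partial>lborel)" .
    qed
    also have "\<dots> \<le> (\<integral>\<^sup>+w. a w * ennreal Kp \<partial>lborel)"
    proof (intro nn_integral_mono mult_left_mono)
      fix w
      show "(\<integral>\<^sup>+y. ennreal (rho y) * indicator (ball w 1) y \<partial>lborel) \<le> ennreal Kp"
        using dens[THEN spec, of w, THEN spec, of 1] by simp
    qed simp
    also have "\<dots> = ennreal Kp * (\<integral>\<^sup>+w. a w \<partial>lborel)"
      by (subst nn_integral_multc) (simp_all add: mult.commute)
    finally show ?thesis .
  qed
  have Bbound: "(\<integral>\<^sup>+y. B1 y \<partial>lborel) \<le> ennreal (4 * Kp) * (\<integral>\<^sup>+z. ennreal ((G z)\<^sup>2) \<partial>lborel)"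
  proof -
    have B1eq: "B1 y = (\<integral>\<^sup>+r. \<integral>\<^sup>+w. \<Phi> y w r \<partial>lborel \<partial>lborel)" for y
    proof -
      have "B1 y = (\<integral>\<^sup>+w. \<integral>\<^sup>+r. \<Phi> y w r \<partial>lborel \<partial>lborel)"
        unfolding B1_def
      proof (intro nn_integral_cong)
        fix w
        show "ennreal (rho y) * indicator (ball y 1) w * J y w = (\<integral>\<^sup>+r. \<Phi> y w r \<partial>lborel)"
          unfolding J_def \<Phi>_def
          by (rule nn_integral_cmult[symmetric]) (unfold indicator_def atLeastAtMost_iff, measurable)
      qed
      also have "\<dots> = (\<integral>\<^sup>+r. \<integral>\<^sup>+w. \<Phi> y w r \<partial>lborel \<partial>lborel)"
        by (rule lborel_pair.Fubini'[symmetric]) (unfold \<Phi>_def indicator_def mem_ball atLeastAtMost_iff, measurable)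
      finally show ?thesis .
    qed
    have "(\<integral>\<^sup>+y. B1 y \<partial>lborel) = (\<integral>\<^sup>+y. \<integral>\<^sup>+r. \<integral>\<^sup>+w. \<Phi> y w r \<partial>lborel \<partial>lborel \<partial>lborel)"
      by (simp add: B1eq)
    also have "\<dots> = (\<integral>\<^sup>+r. \<integral>\<^sup>+y. \<integral>\<^sup>+w. \<Phi> y w r \<partial>lborel \<partial>lborel \<partial>lborel)"
    proof (rule lborel_pair.Fubini'[symmetric])
      show "(\<lambda>(y, r). \<integral>\<^sup>+w. \<Phi> y w r \<partial>lborel) \<in> borel_measurable (lborel \<Otimes>\<^sub>M lborel)"
        using lborel.borel_measurable_nn_integral[of "\<lambda>p w. \<Phi> (fst p) w (snd p)" "lborel \<Otimes>\<^sub>M lborel"] m3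
        by (simp add: split_beta')
    qed
    also have "\<dots> \<le> (\<integral>\<^sup>+r. ennreal (4 * Kp) * (\<integral>\<^sup>+z. ennreal ((G z)\<^sup>2) \<partial>lborel) * indicator {0<..(1::real)} r \<partial>lborel)"
    proof (intro nn_integral_mono)
      fix r :: real
      show "(\<integral>\<^sup>+y. \<integral>\<^sup>+w. \<Phi> y w r \<partial>lborel \<partial>lborel) \<le> ennreal (4 * Kp) * (\<integral>\<^sup>+z. ennreal ((G z)\<^sup>2) \<partial>lborel) * indicator {0<..1} r"
      proof (cases "r \<in> {0<..1}")
        case True
        then have "\<Phi> y w r = ennreal (rho y) * (indicator (ball y 1) w * ennreal ((2*r*G(y + r\<^sup>2 *\<^sub>R (w-y)))\<^sup>2))" for y w
          unfolding \<Phi>_def by (simp add: indicator_def mult_ac)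
        then show ?thesis using True per_r[OF Gm rm rpos Kp dens, of r] by simp
      next
        case False
        then have "\<Phi> y w r = 0" for y w
          unfolding \<Phi>_def by (auto simp: indicator_def)
        then show ?thesis by simp
      qed
    qed
    also have "\<dots> = ennreal (4 * Kp) * (\<integral>\<^sup>+z. ennreal ((G z)\<^sup>2) \<partial>lborel)"
      by (subst nn_integral_cmult_indicator) auto
    finally show ?thesis .
  qed
  have sumeq: "(\<integral>\<^sup>+y. ennreal ((f y)\<^sup>2 + (G y)\<^sup>2) \<partial>lborel)
      = (\<integral>\<^sup>+w. a w \<partial>lborel) + (\<integral>\<^sup>+z. ennreal ((G z)\<^sup>2) \<partial>lborel)"
    unfolding a_def by (subst nn_integral_add[symmetric]) (auto simp: ennreal_plus)
  define X where "X = (\<integral>\<^sup>+w. a w \<partial>lborel)"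
  define Y where "Y = (\<integral>\<^sup>+z. ennreal ((G z)\<^sup>2) \<partial>lborel)"
  have "2 * (\<integral>\<^sup>+y. A1 y \<partial>lborel) + 2 * (\<integral>\<^sup>+y. B1 y \<partial>lborel) \<le> 2 * (ennreal Kp * X) + 2 * (ennreal (4 * Kp) * Y)"
    using Abound Bbound unfolding X_def Y_def by (intro add_mono mult_left_mono) auto
  also have "\<dots> = ennreal (2 * Kp) * X + ennreal (8 * Kp) * Y"
    using Kp by (simp add: ennreal_mult mult.assoc[symmetric])
  also have "\<dots> \<le> ennreal (16 * Kp) * X + ennreal (16 * Kp) * Y"
    using Kp by (intro add_mono mult_right_mono ennreal_leI) auto
  also have "\<dots> = ennreal (16 * Kp) * (\<integral>\<^sup>+y. ennreal ((f y)\<^sup>2 + (G y)\<^sup>2) \<partial>lborel)"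
    unfolding sumeq X_def Y_def by (simp add: distrib_left)
  finally show ?thesis using main unfolding V_def G_def by simp
qed



lemma nn_integral_cmult_le:
  assumes c: "0 \<le> c"
  shows "(\<integral>\<^sup>+x. ennreal c * f x \<partial>M) \<le> ennreal c * (\<integral>\<^sup>+x. f x \<partial>M)"
proof (cases "c = 0")
  case True then show ?thesis by simp
next
  case False
  then have cp: "c > 0" using c by simp
  show ?thesis
    unfolding nn_integral_def
  proof (rule SUP_least)
    fix g assume g: "g \<in> {g. simple_function M g \<and> g \<le> (\<lambda>x. ennreal c * f x)}"
    define h where "h x = ennreal (1/c) * g x" for x
    have hs: "simple_function M h" unfolding h_def using g by auto
    have hf: "h \<le> f"
    proof (rule le_funI)
      fix x
      have "h x \<le> ennreal (1/c) * (ennreal c * f x)"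
        unfolding h_def using g by (intro mult_left_mono) (auto simp: le_fun_def)
      also have "\<dots> = f x" using cp by (simp add: mult.assoc[symmetric] ennreal_mult[symmetric])
      finally show "h x \<le> f x" .
    qed
    have geq: "g x = ennreal c * h x" for x
      unfolding h_def using cp by (simp add: mult.assoc[symmetric] ennreal_mult[symmetric])
    have "integral\<^sup>S M g = ennreal c * integral\<^sup>S M h"
      using simple_integral_mult[OF hs, of "ennreal c"] by (simp add: geq[abs_def])
    also have "\<dots> \<le> ennreal c * (SUP g\<in>{g. simple_function M g \<and> g \<le> f}. integral\<^sup>S M g)"
      using hs hf by (intro mult_left_mono SUP_upper) auto
    finally show "integral\<^sup>S M g \<le> ennreal c * (SUP g\<in>{g. simple_function M g \<and> g \<le> f}. integral\<^sup>S M g)" .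
  qed
qed



theorem proposition5p6:
  fixes T :: real
    and u theta :: "real \<Rightarrow> real \<Rightarrow> real^'n::finite \<Rightarrow> real"
    and u0 :: "real \<Rightarrow> real^'n \<Rightarrow> real"
  defines "g \<equiv> (\<lambda>eps t x. theta eps t x * sqrt (2 * W (u eps t x)))"
  assumes T_pos: "T > 0"
    and theta_C1: "\<forall>eps>0. \<forall>t\<in>{0<..<T}.
          (\<forall>x. theta eps t differentiable (at x)) \<and> continuous_on UNIV (grad (theta eps t))"
    and theta_bound: "(SUP eps\<in>{0<..}. \<integral>\<^sup>+ t\<in>{0<..<T}. \<integral>\<^sup>+ x.
          ennreal ((theta eps t x)\<^sup>2 + (norm (grad (theta eps t) x))\<^sup>2) \<partial>lborel \<partial>lborel) < \<infinity>"
    and sol: "\<forall>eps>0. classical_solution T eps (u eps) (u0 eps) (g eps)"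
    and u0_diff: "\<forall>eps>0. \<forall>x. u0 eps differentiable (at x)"
    and init_energy: "(SUP eps\<in>{0<..}. energy eps (u0 eps) UNIV) < \<infinity>"
    and density: "\<exists>K. \<forall>eps>0. \<forall>t\<in>{0..<T}. \<forall>x. \<forall>R>0.
          energy eps (u eps t) (ball x R) \<le> ennreal (K * R ^ (CARD('n) - 1))"
  shows "(SUP eps\<in>{0<..}. \<integral>\<^sup>+ t\<in>{0<..<T}. \<integral>\<^sup>+ x.
          ennreal ((1 / eps) * (g eps t x)\<^sup>2) \<partial>lborel \<partial>lborel) < \<infinity>"
proof -
  obtain K where K: "\<forall>eps>0. \<forall>t\<in>{0..<T}. \<forall>x. \<forall>R>0.
          energy eps (u eps t) (ball x R) \<le> ennreal (K * R ^ (CARD('n) - 1))"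
    using density by blast
  define Kp where "Kp = 2 * \<bar>K\<bar>"
  have Kp: "0 \<le> Kp" unfolding Kp_def by simp
  define V where "V = measure lborel (ball (0::real^'n) 1)"
  have V: "V > 0" unfolding V_def using content_ball_pos[of 1 "0::real^'n"] by simp
  define C where "C = ennreal (16 * Kp / V)"
  define L where "L eps t = (\<integral>\<^sup>+ x. ennreal ((1 / eps) * (g eps t x)\<^sup>2) \<partial>lborel)" for eps t
  define R where "R eps t = (\<integral>\<^sup>+ x. ennreal ((theta eps t x)\<^sup>2 + (norm (grad (theta eps t) x))\<^sup>2) \<partial>lborel)" for eps t
  have pointwise: "L eps t \<le> C * R eps t" if eps: "eps > 0" and t: "t \<in> {0<..<T}" for eps t
  proof -
    define rho where "rho y = 2 * W (u eps t y) / eps" for y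
    have Wnn: "0 \<le> W r" for r unfolding W_def by simp
    have rpos: "\<forall>y. 0 \<le> rho y" unfolding rho_def using eps Wnn by simp
    have cu: "continuous_on UNIV (u eps t)"
    proof -
      have "continuous_on ({0..<T} \<times> UNIV) (\<lambda>(t, x). u eps t x)"
        using sol eps unfolding classical_solution_def by blast
      moreover have "continuous_on UNIV (\<lambda>x::real^'n. (t, x))" by (intro continuous_intros)
      moreover have "(\<lambda>x::real^'n. (t, x)) ` UNIV \<subseteq> {0..<T} \<times> UNIV" using t by auto
      ultimately have "continuous_on UNIV (\<lambda>x. (\<lambda>(t, x). u eps t x) (t, x))"
        by (rule continuous_on_compose2)
      then show ?thesis by simp
    qed
    have cW: "continuous_on UNIV W" unfolding W_def[abs_def] by (intro continuous_intros) auto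
    have crho: "continuous_on UNIV rho" unfolding rho_def
      using eps by (intro continuous_intros continuous_on_compose2[OF cW cu]) auto
    have rm: "rho \<in> borel_measurable borel" using crho borel_measurable_continuous_onI by blast
    have dens: "\<forall>z. \<forall>s>0. (\<integral>\<^sup>+y. ennreal (rho y) * indicator (ball z s) y \<partial>lborel) \<le> ennreal (Kp * s ^ (CARD('n) - 1))"
    proof (intro allI impI)
      fix z and s :: real assume s: "s > 0"
      have "(\<integral>\<^sup>+y. ennreal (rho y) * indicator (ball z s) y \<partial>lborel)
          \<le> (\<integral>\<^sup>+y. ennreal 2 * (ennreal (eps / 2 * (norm (grad (u eps t) y))\<^sup>2 + W (u eps t y) / eps) * indicator (ball z s) y) \<partial>lborel)"
      proof (intro nn_integral_mono)
        fix y
        have "rho y \<le> 2 * (eps / 2 * (norm (grad (u eps t) y))\<^sup>2 + W (u eps t y) / eps)"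
          unfolding rho_def using eps by simp
        then have "ennreal (rho y) \<le> ennreal (2 * (eps / 2 * (norm (grad (u eps t) y))\<^sup>2 + W (u eps t y) / eps))"
          by (rule ennreal_leI)
        also have "\<dots> = ennreal 2 * ennreal (eps / 2 * (norm (grad (u eps t) y))\<^sup>2 + W (u eps t y) / eps)"
          by (rule ennreal_mult) (use eps Wnn in auto)
        finally have "ennreal (rho y) \<le> ennreal 2 * ennreal (eps / 2 * (norm (grad (u eps t) y))\<^sup>2 + W (u eps t y) / eps)" .
        then show "ennreal (rho y) * indicator (ball z s) y \<le> ennreal 2 * (ennreal (eps / 2 * (norm (grad (u eps t) y))\<^sup>2 + W (u eps t y) / eps) * indicator (ball z s) y)"
          by (auto simp: indicator_def)
      qed
      also have "\<dots> \<le> ennreal 2 * energy eps (u eps t) (ball z s)"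
        unfolding energy_def by (rule nn_integral_cmult_le) simp
      also have "\<dots> \<le> ennreal 2 * ennreal (\<bar>K\<bar> * s ^ (CARD('n) - 1))"
      proof (intro mult_left_mono)
        have "energy eps (u eps t) (ball z s) \<le> ennreal (K * s ^ (CARD('n) - 1))"
          using K eps t s by auto
        also have "\<dots> \<le> ennreal (\<bar>K\<bar> * s ^ (CARD('n) - 1))"
          using s by (intro ennreal_leI mult_right_mono) auto
        finally show "energy eps (u eps t) (ball z s) \<le> ennreal (\<bar>K\<bar> * s ^ (CARD('n) - 1))" .
      qed simp
      also have "\<dots> = ennreal (Kp * s ^ (CARD('n) - 1))"
        unfolding Kp_def mult.assoc by (rule ennreal_mult[symmetric]) (use s in auto)
      finally show "(\<integral>\<^sup>+y. ennreal (rho y) * indicator (ball z s) y \<partial>lborel) \<le> ennreal (Kp * s ^ (CARD('n) - 1))" .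
    qed
    have d: "\<forall>x. theta eps t differentiable (at x)" and cg: "continuous_on UNIV (grad (theta eps t))"
      using theta_C1 eps t by auto
    from key[OF d cg rm rpos Kp dens]
    have k: "ennreal V * (\<integral>\<^sup>+y. ennreal (rho y * (theta eps t y)\<^sup>2) \<partial>lborel) \<le> ennreal (16 * Kp) * R eps t"
      unfolding V_def R_def .
    have Leq: "L eps t = (\<integral>\<^sup>+y. ennreal (rho y * (theta eps t y)\<^sup>2) \<partial>lborel)"
      unfolding L_def
    proof (intro nn_integral_cong)
      fix y
      have "(sqrt (2 * W (u eps t y)))\<^sup>2 = 2 * W (u eps t y)" using Wnn by simp
      then show "ennreal (1 / eps * (g eps t y)\<^sup>2) = ennreal (rho y * (theta eps t y)\<^sup>2)"
        unfolding g_def rho_def by (simp add: power_mult_distrib field_simps)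
    qed
    have "L eps t = ennreal (1 / V) * (ennreal V * L eps t)"
      using V by (simp add: mult.assoc[symmetric] ennreal_mult[symmetric])
    also have "\<dots> \<le> ennreal (1 / V) * (ennreal (16 * Kp) * R eps t)"
      using k unfolding Leq by (intro mult_left_mono) auto
    also have "\<dots> = C * R eps t"
      unfolding C_def using V Kp by (simp add: mult.assoc[symmetric] ennreal_mult[symmetric])
    finally show ?thesis .
  qed
  have "(\<integral>\<^sup>+ t\<in>{0<..<T}. L eps t \<partial>lborel) \<le> C * (SUP eps\<in>{0<..}. \<integral>\<^sup>+ t\<in>{0<..<T}. R eps t \<partial>lborel)"
    if eps: "eps \<in> {0<..}" for eps
  proof -
    have "(\<integral>\<^sup>+ t\<in>{0<..<T}. L eps t \<partial>lborel) \<le> (\<integral>\<^sup>+ t. C * (R eps t * indicator {0<..<T} t) \<partial>lborel)"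
      using pointwise eps by (intro nn_integral_mono) (auto simp: indicator_def)
    also have "\<dots> \<le> C * (\<integral>\<^sup>+ t\<in>{0<..<T}. R eps t \<partial>lborel)"
      unfolding C_def by (rule nn_integral_cmult_le) (use Kp V in simp)
    also have "\<dots> \<le> C * (SUP eps\<in>{0<..}. \<integral>\<^sup>+ t\<in>{0<..<T}. R eps t \<partial>lborel)"
      using eps by (intro mult_left_mono SUP_upper) auto
    finally show ?thesis .
  qed
  then have "(SUP eps\<in>{0<..}. \<integral>\<^sup>+ t\<in>{0<..<T}. L eps t \<partial>lborel) \<le> C * (SUP eps\<in>{0<..}. \<integral>\<^sup>+ t\<in>{0<..<T}. R eps t \<partial>lborel)"
    by (rule SUP_least)
  also have "\<dots> < \<infinity>"
    using theta_bound unfolding C_def R_def by (simp add: ennreal_mult_less_top)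
  finally show ?thesis unfolding L_def .
qed


end
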